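(* Let $n\ge2$ and $\sigma,\delta,\tau\in\mathbb{C}$ with $\sigma\tau\ne0$, and let $\lambda_h=\delta+2\sqrt{\sigma\tau}\cos\frac{h\pi}{n+1}$ ($1\le h\le n$) be an eigenvalue of $T=(n;\sigma,\delta,\tau)$. Then its $\mathcal{T}$-structured condition number is \[ \kappa_{\mathcal T}(\lambda_h)=\sqrt{\frac1n+\frac1{n-1}\left(\left|\frac{\sigma}{\tau}\right|+\left|\frac{\tau}{\sigma}\right|\right)\cos^2\frac{h\pi}{n+1}}. \] In particular $\kappa_{\mathcal T}(\lambda_h)$ depends only on $h$, $n$ and $|\sigma/\tau|$.
   Context: $T=(n;\sigma,\delta,\tau)$ is the $n\times n$ tridiagonal Toeplitz matrix with diagonal $\delta$, superdiagonal $\tau$, subdiagonal $\sigma$. Its eigenvalue $\lambda_h$ has right eigenvector $x_h$ with components $x_{h,k}=(\sqrt{\sigma/\tau})^k\sin\frac{hk\pi}{n+1}$ and left eigenvector $y_h$ ($y_h^HT=\lambda_hy_h^H$) with $y_{h,k}=(\sqrt{\bar\tau/\bar\sigma})^k\sin\frac{hk\pi}{n+1}$, $k=1,\dots,n$. Let $\widetilde x_h=x_h/\|x_h\|_2$, $\widetilde y_h=y_h/\|y_h\|_2$, $\kappa(\lambda_h)=\|x_h\|_2\|y_h\|_2/|y_h^Hx_h|$, and $W_h=\widetilde y_h\widetilde x_h^H$ (the Wilkinson perturbation). Let $\mathcal T\subset\mathbb{C}^{n\times n}$ be the subspace of $n\times n$ tridiagonal Toeplitz matrices and $W_h|_{\mathcal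 T}$ the orthogonal projection of $W_h$ onto $\mathcal T$ with respect to the Frobenius inner product. The $\mathcal T$-structured condition number is $\kappa_{\mathcal T}(\lambda_h)=\kappa(\lambda_h)\,\|W_h|_{\mathcal T}\|_F$. *)

theory Defs
  imports Complex_Main
begin

text \<open>Matrices of size n are represented as functions nat => nat => complex,
  indexed by 1..n and zero outside; vectors as nat => complex indexed by 1..n.\<close>

definition tridiag_toeplitz :: "nat \<Rightarrow> complex \<Rightarrow> complex \<Rightarrow> complex \<Rightarrow> nat \<Rightarrow> nat \<Rightarrow> complex" where
  "tridiag_toeplitz n \<sigma> \<delta> \<tau> i j =
     (if 1 \<le> i \<and> i \<le> n \<and> 1 \<le> j \<and> j \<le> n then
        (if i = j then \<delta> else if j = i + 1 then \<tau> else if i = j + 1 then \<sigma> else 0)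
      else 0)"

definition tt_space :: "nat \<Rightarrow> (nat \<Rightarrow> nat \<Rightarrow> complex) set" where
  "tt_space n = {M. \<exists>\<sigma> \<delta> \<tau>. M = tridiag_toeplitz n \<sigma> \<delta> \<tau>}"

definition vnorm :: "nat \<Rightarrow> (nat \<Rightarrow> complex) \<Rightarrow> real" where
  "vnorm n v = sqrt (\<Sum>k=1..n. (cmod (v k))^2)"

definition vinner :: "nat \<Rightarrow> (nat \<Rightarrow> complex) \<Rightarrow> (nat \<Rightarrow> complex) \<Rightarrow> complex" where
  "vinner n y x = (\<Sum>k=1..n. cnj (y k) * x k)"

definition frob_inner :: "nat \<Rightarrow> (nat \<Rightarrow> nat \<Rightarrow> complex) \<Rightarrow> (nat \<Rightarrow> nat \<Rightarrow> complex) \<Rightarrow> complex" where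
  "frob_inner n A B = (\<Sum>i=1..n. \<Sum>j=1..n. A i j * cnj (B i j))"

definition frob_norm :: "nat \<Rightarrow> (nat \<Rightarrow> nat \<Rightarrow> complex) \<Rightarrow> real" where
  "frob_norm n A = sqrt (\<Sum>i=1..n. \<Sum>j=1..n. (cmod (A i j))^2)"

definition proj_tt :: "nat \<Rightarrow> (nat \<Rightarrow> nat \<Rightarrow> complex) \<Rightarrow> (nat \<Rightarrow> nat \<Rightarrow> complex)" where
  "proj_tt n W = (THE P. P \<in> tt_space n \<and>
      (\<forall>M\<in>tt_space n. frob_inner n (\<lambda>i j. W i j - P i j) M = 0))"

definition right_ev :: "nat \<Rightarrow> complex \<Rightarrow> complex \<Rightarrow> nat \<Rightarrow> nat \<Rightarrow> complex" where
  "right_ev n \<sigma> \<tau> h k = (csqrt (\<sigma> / \<tau>)) ^ k * complex_of_real (sin (real h * real k * pi / real (n + 1)))"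

definition left_ev :: "nat \<Rightarrow> complex \<Rightarrow> complex \<Rightarrow> nat \<Rightarrow> nat \<Rightarrow> complex" where
  "left_ev n \<sigma> \<tau> h k = (csqrt (cnj \<tau> / cnj \<sigma>)) ^ k * complex_of_real (sin (real h * real k * pi / real (n + 1)))"

definition cond_num :: "nat \<Rightarrow> complex \<Rightarrow> complex \<Rightarrow> nat \<Rightarrow> real" where
  "cond_num n \<sigma> \<tau> h =
     vnorm n (right_ev n \<sigma> \<tau> h) * vnorm n (left_ev n \<sigma> \<tau> h)
       / cmod (vinner n (left_ev n \<sigma> \<tau> h) (right_ev n \<sigma> \<tau> h))"

definition wilkinson :: "nat \<Rightarrow> complex \<Rightarrow> complex \<Rightarrow> nat \<Rightarrow> nat \<Rightarrow> nat \<Rightarrow> complex" where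
  "wilkinson n \<sigma> \<tau> h i j =
     (if 1 \<le> i \<and> i \<le> n \<and> 1 \<le> j \<and> j \<le> n then
        (left_ev n \<sigma> \<tau> h i / complex_of_real (vnorm n (left_ev n \<sigma> \<tau> h)))
        * cnj (right_ev n \<sigma> \<tau> h j / complex_of_real (vnorm n (right_ev n \<sigma> \<tau> h)))
      else 0)"

text \<open>Structured condition number of lambda_h for T = (n; sigma, delta, tau).
  (It does not depend on delta, which is kept as an argument to mirror the paper.)\<close>
definition struct_cond_num :: "nat \<Rightarrow> complex \<Rightarrow> complex \<Rightarrow> complex \<Rightarrow> nat \<Rightarrow> real" where
  "struct_cond_num n \<sigma> \<delta> \<tau> h =
     cond_num n \<sigma> \<tau> h * frob_norm n (proj_tt n (wilkinson n \<sigma> \<tau> h))"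

end

theory Submission imports Defs begin

lemma inner_tt:
  assumes n1: "n \<ge> 1"
  shows "frob_inner n A (tridiag_toeplitz n s d t) =
    cnj d * (\<Sum>i=1..n. A i i) + cnj t * (\<Sum>i=1..n-1. A i (Suc i)) + cnj s * (\<Sum>i=1..n-1. A (Suc i) i)"
proof -
  have pt: "A i j * cnj (tridiag_toeplitz n s d t i j) =
     (if j = i then cnj d * A i i else 0) + (if j = Suc i then cnj t * A i j else 0)
     + (if Suc j = i then cnj s * A i j else 0)"
    if "i \<in> {1..n}" "j \<in> {1..n}" for i j
    using that unfolding tridiag_toeplitz_def by auto
  have dl: "(\<Sum>j=1..n. if Suc j = i then g j else 0) = (if 2 \<le> i then g (i-1) else 0)"
    if "i \<in> {1..n}" for i and g :: "nat \<Rightarrow> complex"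
  proof -
    have "(\<Sum>j=1..n. if Suc j = i then g j else 0) = (\<Sum>j=1..n. if j = i - 1 then g j else 0)"
      by (rule sum.cong) (use that in auto)
    also have "\<dots> = (if 2 \<le> i then g (i-1) else 0)" using that by (auto simp add: sum.delta')
    finally show ?thesis .
  qed
  have inner: "(\<Sum>j=1..n. A i j * cnj (tridiag_toeplitz n s d t i j)) =
      cnj d * A i i + (if Suc i \<le> n then cnj t * A i (Suc i) else 0)
      + (if 2 \<le> i then cnj s * A i (i - 1) else 0)"
    if "i \<in> {1..n}" for i
  proof -
    have "(\<Sum>j=1..n. A i j * cnj (tridiag_toeplitz n s d t i j)) =
       (\<Sum>j=1..n. (if j = i then cnj d * A i i else 0) + (if j = Suc i then cnj t * A i j else 0)
     + (if Suc j = i then cnj s * A i j else 0))"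
      using that by (intro sum.cong) (auto simp: pt)
    also have "\<dots> = cnj d * A i i + (if Suc i \<le> n then cnj t * A i (Suc i) else 0)
      + (if 2 \<le> i then cnj s * A i (i - 1) else 0)"
      using that by (simp only: sum.distrib dl) (simp add: sum.delta')
    finally show ?thesis .
  qed
  have "frob_inner n A (tridiag_toeplitz n s d t) =
     (\<Sum>i=1..n. cnj d * A i i + (if Suc i \<le> n then cnj t * A i (Suc i) else 0)
      + (if 2 \<le> i then cnj s * A i (i - 1) else 0))"
    unfolding frob_inner_def by (intro sum.cong refl inner)
  also have "\<dots> = cnj d * (\<Sum>i=1..n. A i i) + (\<Sum>i=1..n. if Suc i \<le> n then cnj t * A i (Suc i) else 0)
      + (\<Sum>i=1..n. if 2 \<le> i then cnj s * A i (i - 1) else 0)"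
    by (simp add: sum.distrib sum_distrib_left)
  also have "(\<Sum>i=1..n. if Suc i \<le> n then cnj t * A i (Suc i) else 0) = (\<Sum>i=1..n-1. cnj t * A i (Suc i))"
  proof -
    have "{i \<in> {1..n}. Suc i \<le> n} = {1..n-1}" by auto
    thus ?thesis by (simp add: sum.inter_filter[symmetric])
  qed
  also have "(\<Sum>i=1..n. if 2 \<le> i then cnj s * A i (i - 1) else 0) = (\<Sum>i=1..n-1. cnj s * A (Suc i) i)"
  proof -
    have "{i \<in> {1..n}. 2 \<le> i} = {Suc 1..Suc (n-1)}" using n1 by auto
    hence "(\<Sum>i=1..n. if 2 \<le> i then cnj s * A i (i - 1) else 0) = (\<Sum>i=Suc 1..Suc (n-1). cnj s * A i (i - 1))"
      by (simp add: sum.inter_filter[symmetric])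
    also have "\<dots> = (\<Sum>i=1..n-1. cnj s * A (Suc i) i)" by (simp only: sum.shift_bounds_cl_Suc_ivl diff_Suc_1)
    finally show ?thesis .
  qed
  finally show ?thesis by (simp add: sum_distrib_left)
qed

lemma tt_sums:
  shows "(\<Sum>i=1..n. tridiag_toeplitz n s d t i i) = of_nat n * d"
    and "(\<Sum>i=1..n-1. tridiag_toeplitz n s d t i (Suc i)) = of_nat (n-1) * t"
    and "(\<Sum>i=1..n-1. tridiag_toeplitz n s d t (Suc i) i) = of_nat (n-1) * s"
proof -
  have "(\<Sum>i=1..n. tridiag_toeplitz n s d t i i) = (\<Sum>i=1..n. d)"
    by (rule sum.cong) (auto simp: tridiag_toeplitz_def)
  thus "(\<Sum>i=1..n. tridiag_toeplitz n s d t i i) = of_nat n * d" by simp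
  have "(\<Sum>i=1..n-1. tridiag_toeplitz n s d t i (Suc i)) = (\<Sum>i=1..n-1. t)"
    by (rule sum.cong) (auto simp: tridiag_toeplitz_def)
  thus "(\<Sum>i=1..n-1. tridiag_toeplitz n s d t i (Suc i)) = of_nat (n-1) * t" by simp
  have "(\<Sum>i=1..n-1. tridiag_toeplitz n s d t (Suc i) i) = (\<Sum>i=1..n-1. s)"
    by (rule sum.cong) (auto simp: tridiag_toeplitz_def)
  thus "(\<Sum>i=1..n-1. tridiag_toeplitz n s d t (Suc i) i) = of_nat (n-1) * s" by simp
qed

lemma cmod_sq_Re: "(cmod z)^2 = Re (z * cnj z)"
  by (simp only: cmod_power2) (simp add: power2_eq_square)

lemma frob_norm_tt:
  assumes n1: "n \<ge> 1"
  shows "frob_norm n (tridiag_toeplitz n s d t) =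
     sqrt (real n * (cmod d)^2 + real (n-1) * ((cmod t)^2 + (cmod s)^2))"
proof -
  let ?T = "tridiag_toeplitz n s d t"
  have "(\<Sum>i=1..n. \<Sum>j=1..n. (cmod (?T i j))^2) = Re (frob_inner n ?T ?T)"
    unfolding frob_inner_def by (simp add: cmod_sq_Re Re_sum)
  also have "frob_inner n ?T ?T = cnj d * (of_nat n * d) + cnj t * (of_nat (n-1) * t) + cnj s * (of_nat (n-1) * s)"
    by (simp only: inner_tt[OF n1] tt_sums)
  also have "Re \<dots> = real n * (cmod d)^2 + real (n-1) * ((cmod t)^2 + (cmod s)^2)"
    by (simp add: cmod_sq_Re algebra_simps)
  finally show ?thesis unfolding frob_norm_def by simp
qed

lemma proj_tt_eq:
  fixes W :: "nat \<Rightarrow> nat \<Rightarrow> complex"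
  assumes n2: "n \<ge> 2"
  defines "S0 \<equiv> (\<Sum>i=1..n. W i i)" and "S1 \<equiv> (\<Sum>i=1..n-1. W i (Suc i))"
    and "S2 \<equiv> (\<Sum>i=1..n-1. W (Suc i) i)"
  shows "proj_tt n W = tridiag_toeplitz n (S2 / of_nat (n-1)) (S0 / of_nat n) (S1 / of_nat (n-1))"
proof -
  have n1: "n \<ge> 1" using n2 by simp
  have nz: "(of_nat n :: complex) \<noteq> 0" "(of_nat (n-1) :: complex) \<noteq> 0" using n2 by auto
  have key: "frob_inner n (\<lambda>i j. W i j - tridiag_toeplitz n s1 d1 t1 i j) (tridiag_toeplitz n s d t)
     = cnj d * (S0 - of_nat n * d1) + cnj t * (S1 - of_nat (n-1) * t1) + cnj s * (S2 - of_nat (n-1) * s1)"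
    for s1 d1 t1 s d t
    by (simp only: inner_tt[OF n1] sum_subtractf tt_sums S0_def S1_def S2_def)
  let ?P = "tridiag_toeplitz n (S2 / of_nat (n-1)) (S0 / of_nat n) (S1 / of_nat (n-1))"
  show ?thesis unfolding proj_tt_def
  proof (rule the_equality)
    show "?P \<in> tt_space n \<and> (\<forall>M\<in>tt_space n. frob_inner n (\<lambda>i j. W i j - ?P i j) M = 0)"
      unfolding tt_space_def using n2 by (auto simp: key nz)
  next
    fix P assume a: "P \<in> tt_space n \<and> (\<forall>M\<in>tt_space n. frob_inner n (\<lambda>i j. W i j - P i j) M = 0)"
    then obtain s1 d1 t1 where P: "P = tridiag_toeplitz n s1 d1 t1" unfolding tt_space_def by auto
    have mem: "tridiag_toeplitz n s d t \<in> tt_space n" for s d t unfolding tt_space_def by auto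
    have e0: "frob_inner n (\<lambda>i j. W i j - P i j) (tridiag_toeplitz n 0 1 0) = 0" using a mem by blast
    have e1: "frob_inner n (\<lambda>i j. W i j - P i j) (tridiag_toeplitz n 0 0 1) = 0" using a mem by blast
    have e2: "frob_inner n (\<lambda>i j. W i j - P i j) (tridiag_toeplitz n 1 0 0) = 0" using a mem by blast
    have "d1 = S0 / of_nat n" using e0 nz unfolding P key by (simp add: field_simps)
    moreover have "t1 = S1 / of_nat (n-1)" using e1 nz unfolding P key by (simp add: field_simps)
    moreover have "s1 = S2 / of_nat (n-1)" using e2 nz unfolding P key by (simp add: field_simps)
    ultimately show "P = ?P" using P by simp
  qed
qed

lemma cos2hpi: "cos (2 * (real h * pi)) = 1"
  using cos_integer_2pi[of "real h"] by (simp add: ac_simps)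
lemma sin2hpi: "sin (2 * (real h * pi)) = 0"
  using sin_integer_2pi[of "real h"] by (simp add: ac_simps)

lemma cos_sum_even:
  fixes \<alpha> :: real and n h :: nat
  assumes s: "sin \<alpha> \<noteq> 0" and e: "real (n+1) * \<alpha> = real h * pi"
  shows "(\<Sum>k<n+1. cos (2 * real k * \<alpha>)) = 0"
proof -
  define f where "f k = sin ((2 * real k - 1) * \<alpha>)" for k :: nat
  have step: "2 * sin \<alpha> * cos (2 * real k * \<alpha>) = f (Suc k) - f k" for k
  proof -
    have "f (Suc k) = sin (2 * real k * \<alpha> + \<alpha>)" unfolding f_def by (simp add: algebra_simps)
    moreover have "f k = sin (2 * real k * \<alpha> - \<alpha>)" unfolding f_def by (simp add: algebra_simps)
    ultimately show ?thesis by (simp add: sin_add sin_diff)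
  qed
  have "2 * sin \<alpha> * (\<Sum>k<n+1. cos (2 * real k * \<alpha>)) = (\<Sum>k<n+1. f (Suc k) - f k)"
    by (simp only: sum_distrib_left step)
  also have "\<dots> = f (n+1) - f 0" by (rule sum_lessThan_telescope)
  also have "f (n+1) = sin (2 * (real (n+1) * \<alpha>) - \<alpha>)"
    unfolding f_def by (rule arg_cong[where f=sin]) (simp add: algebra_simps)
  also have "\<dots> = sin (2 * (real h * pi) - \<alpha>)" using e by simp
  also have "\<dots> = - sin \<alpha>"
    by (simp add: sin_diff cos2hpi sin2hpi)
  finally have "2 * sin \<alpha> * (\<Sum>k<n+1. cos (2 * real k * \<alpha>)) = 0" by (simp add: f_def)
  thus ?thesis using s by simp
qed

lemma cos_sum_odd:
  fixes \<alpha> :: real and n h :: nat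
  assumes s: "sin \<alpha> \<noteq> 0" and e: "real (n+1) * \<alpha> = real h * pi"
  shows "(\<Sum>k<n+1. cos ((2 * real k + 1) * \<alpha>)) = 0"
proof -
  define f where "f k = sin (2 * real k * \<alpha>)" for k :: nat
  have step: "2 * sin \<alpha> * cos ((2 * real k + 1) * \<alpha>) = f (Suc k) - f k" for k
  proof -
    have "f (Suc k) = sin ((2 * real k + 1) * \<alpha> + \<alpha>)" unfolding f_def by (simp add: algebra_simps)
    moreover have "f k = sin ((2 * real k + 1) * \<alpha> - \<alpha>)" unfolding f_def by (simp add: algebra_simps)
    ultimately show ?thesis by (simp add: sin_add sin_diff)
  qed
  have "2 * sin \<alpha> * (\<Sum>k<n+1. cos ((2 * real k + 1) * \<alpha>)) = (\<Sum>k<n+1. f (Suc k) - f k)"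
    by (simp only: sum_distrib_left step)
  also have "\<dots> = f (n+1) - f 0" by (rule sum_lessThan_telescope)
  also have "f (n+1) = sin (2 * (real (n+1) * \<alpha>))"
    unfolding f_def by (rule arg_cong[where f=sin]) (simp add: algebra_simps)
  also have "\<dots> = sin (2 * (real h * pi))" using e by simp
  also have "\<dots> = 0"
    by (rule sin2hpi)
  finally have "2 * sin \<alpha> * (\<Sum>k<n+1. cos ((2 * real k + 1) * \<alpha>)) = 0" by (simp add: f_def)
  thus ?thesis using s by simp
qed

lemma alpha_facts:
  fixes n h :: nat
  assumes "1 \<le> h" "h \<le> n"
  defines "\<alpha> \<equiv> real h * pi / real (n+1)"
  shows "sin \<alpha> \<noteq> 0" "real (n+1) * \<alpha> = real h * pi"
proof -
  have "0 < \<alpha>" using assms by (simp add: \<alpha>_def)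
  moreover have "\<alpha> < pi"
  proof -
    have "pi * real h < pi * real (n+1)" using assms pi_gt_zero by (intro mult_strict_left_mono) auto
    thus ?thesis by (simp add: \<alpha>_def field_simps)
  qed
  ultimately show "sin \<alpha> \<noteq> 0" using sin_gt_zero by force
  show "real (n+1) * \<alpha> = real h * pi" by (simp add: \<alpha>_def)
qed

lemma sin_sq_sum:
  fixes n h :: nat
  assumes "1 \<le> h" "h \<le> n"
  shows "(\<Sum>k=1..n. (sin (real h * real k * pi / real (n+1)))^2) = real (n+1) / 2"
proof -
  define \<alpha> where "\<alpha> = real h * pi / real (n+1)"
  note af = alpha_facts[OF assms, folded \<alpha>_def]
  have r: "real h * real k * pi / real (n+1) = real k * \<alpha>" for k by (simp add: \<alpha>_def)
  have sq: "(sin (real k * \<alpha>))^2 = 1/2 - cos (2 * real k * \<alpha>) / 2" for k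
    using cos_double_sin[of "real k * \<alpha>"] by (simp add: ac_simps field_simps)
  have c0: "(\<Sum>k<n+1. cos (2 * real k * \<alpha>)) = 0" by (rule cos_sum_even[OF af])
  have "{..<n+1} = insert 0 {1..n}" by auto
  hence "(\<Sum>k<n+1. cos (2 * real k * \<alpha>)) = 1 + (\<Sum>k=1..n. cos (2 * real k * \<alpha>))" by simp
  hence c1: "(\<Sum>k=1..n. cos (2 * real k * \<alpha>)) = -1" using c0 by linarith
  have "(\<Sum>k=1..n. (sin (real h * real k * pi / real (n+1)))^2) = (\<Sum>k=1..n. 1/2 - cos (2 * real k * \<alpha>) / 2)"
    by (simp only: r sq)
  also have "\<dots> = real n / 2 - (\<Sum>k=1..n. cos (2 * real k * \<alpha>)) / 2"
    by (simp add: sum_subtractf sum_divide_distrib)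
  also have "\<dots> = real (n+1) / 2" using c1 by simp
  finally show ?thesis .
qed

lemma sin_prod_sum:
  fixes n h :: nat
  assumes "1 \<le> h" "h \<le> n"
  shows "(\<Sum>k=1..n-1. sin (real h * real k * pi / real (n+1)) * sin (real h * real (Suc k) * pi / real (n+1)))
         = real (n+1) / 2 * cos (real h * pi / real (n+1))"
proof -
  define \<alpha> where "\<alpha> = real h * pi / real (n+1)"
  note af = alpha_facts[OF assms, folded \<alpha>_def]
  have r: "real h * real k * pi / real (n+1) = real k * \<alpha>" for k by (simp add: \<alpha>_def)
  have pr: "sin (real k * \<alpha>) * sin (real (Suc k) * \<alpha>) = cos \<alpha> / 2 - cos ((2 * real k + 1) * \<alpha>) / 2" for k
  proof -
    have a: "real k * \<alpha> - real (Suc k) * \<alpha> = - \<alpha>" by (simp add: algebra_simps)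
    have b: "real k * \<alpha> + real (Suc k) * \<alpha> = (2 * real k + 1) * \<alpha>" by (simp add: algebra_simps)
    show ?thesis unfolding sin_times_sin a b by (simp add: diff_divide_distrib)
  qed
  have c0: "(\<Sum>k<n+1. cos ((2 * real k + 1) * \<alpha>)) = 0" by (rule cos_sum_odd[OF af])
  have n1: "n \<ge> 1" using assms by simp
  have "{..<n+1} = insert 0 (insert n {1..n-1})" using n1 by auto
  hence "(\<Sum>k<n+1. cos ((2 * real k + 1) * \<alpha>)) = cos \<alpha> + cos ((2 * real n + 1) * \<alpha>) + (\<Sum>k=1..n-1. cos ((2 * real k + 1) * \<alpha>))"
    using n1 by simp
  moreover have "cos ((2 * real n + 1) * \<alpha>) = cos \<alpha>"
  proof -
    have "(2 * real n + 1) * \<alpha> = 2 * (real (n+1) * \<alpha>) - \<alpha>" by (simp add: algebra_simps)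
    also have "\<dots> = 2 * (real h * pi) - \<alpha>" using af(2) by simp
    finally show ?thesis by (simp add: cos_diff cos2hpi sin2hpi)
  qed
  ultimately have c1: "(\<Sum>k=1..n-1. cos ((2 * real k + 1) * \<alpha>)) = - 2 * cos \<alpha>" using c0 by linarith
  have "(\<Sum>k=1..n-1. sin (real h * real k * pi / real (n+1)) * sin (real h * real (Suc k) * pi / real (n+1)))
      = (\<Sum>k=1..n-1. cos \<alpha> / 2 - cos ((2 * real k + 1) * \<alpha>) / 2)"
    by (simp only: r pr)
  also have "\<dots> = real (n-1) * cos \<alpha> / 2 - (\<Sum>k=1..n-1. cos ((2 * real k + 1) * \<alpha>)) / 2"
    by (simp add: sum_subtractf sum_divide_distrib)
  also have "\<dots> = real (n+1) / 2 * cos \<alpha>" using c1 n1 by (simp add: of_nat_diff field_simps)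
  finally show ?thesis by (simp add: \<alpha>_def)
qed


lemma csqrt_inv_cnj:
  assumes "z \<noteq> 0"
  shows "csqrt (cnj (inverse z)) = inverse (cnj (csqrt z))"
proof (rule csqrt_unique)
  show "(inverse (cnj (csqrt z)))\<^sup>2 = cnj (inverse z)"
    by (metis complex_cnj_inverse complex_cnj_power power2_csqrt power_inverse)
  let ?a = "csqrt z"
  have D: "(Re ?a)\<^sup>2 + (Im ?a)\<^sup>2 > 0" using assms
    by (metis csqrt_eq_0 complex_eq_0 less_linear not_less sum_power2_ge_zero)
  have re: "Re (inverse (cnj ?a)) = Re ?a / ((Re ?a)\<^sup>2 + (Im ?a)\<^sup>2)"
    and im: "Im (inverse (cnj ?a)) = Im ?a / ((Re ?a)\<^sup>2 + (Im ?a)\<^sup>2)"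
    by simp_all
  show "0 < Re (inverse (cnj ?a)) \<or> Re (inverse (cnj ?a)) = 0 \<and> 0 \<le> Im (inverse (cnj ?a))"
    using csqrt_principal[of z] D unfolding re im by (auto simp: divide_pos_pos)
qed

lemma ab_one:
  assumes "\<sigma> * \<tau> \<noteq> 0"
  shows "cnj (csqrt (cnj \<tau> / cnj \<sigma>)) * csqrt (\<sigma> / \<tau>) = 1"
proof -
  have "cnj \<tau> / cnj \<sigma> = cnj (inverse (\<sigma> / \<tau>))" by (simp add: complex_cnj_divide)
  hence "csqrt (cnj \<tau> / cnj \<sigma>) = inverse (cnj (csqrt (\<sigma> / \<tau>)))"
    using csqrt_inv_cnj[of "\<sigma>/\<tau>"] assms by simp
  thus ?thesis using assms by (simp add: complex_cnj_inverse)
qed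


lemma final_alg0:
  fixes NN m c rho rho' p q :: real
  assumes "NN > 0" "m > 0" "p > 0" "q > 0"
  shows "(NN/m)^2 * (p * (m^2 / (NN^2 * p^2)) + q * (rho * (m*c)^2 / (NN^2 * q^2) + rho' * (m*c)^2 / (NN^2 * q^2)))
      = 1 / p + 1 / q * (rho + rho') * c^2"
  using assms by (simp add: field_simps power2_eq_square)

lemma final_alg:
  fixes NN m C rho rho' c :: real and n :: nat
  assumes NN: "NN > 0" and m: "m > 0" and n2: "n \<ge> 2" and C: "C = m * c"
  shows "NN / m * sqrt (real n * (m^2 / (NN^2 * (real n)^2)) + real (n-1) * (rho * C^2 / (NN^2 * (real (n-1))^2) + rho' * C^2 / (NN^2 * (real (n-1))^2)))
     = sqrt (1 / real n + 1 / (real n - 1) * (rho + rho') * c^2)"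
proof -
  have rn1: "real (n-1) = real n - 1" using n2 by (simp add: of_nat_diff)
  have n1: "real n - 1 > 0" "real n > 0" using n2 by auto
  have "NN / m = sqrt ((NN/m)^2)" using NN m by simp
  hence "NN / m * sqrt (real n * (m^2 / (NN^2 * (real n)^2)) + real (n-1) * (rho * C^2 / (NN^2 * (real (n-1))^2) + rho' * C^2 / (NN^2 * (real (n-1))^2)))
      = sqrt ((NN/m)^2 * (real n * (m^2 / (NN^2 * (real n)^2)) + real (n-1) * (rho * C^2 / (NN^2 * (real (n-1))^2) + rho' * C^2 / (NN^2 * (real (n-1))^2))))"
    by (metis real_sqrt_mult)
  also have "(NN/m)^2 * (real n * (m^2 / (NN^2 * (real n)^2)) + real (n-1) * (rho * C^2 / (NN^2 * (real (n-1))^2) + rho' * C^2 / (NN^2 * (real (n-1))^2)))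
      = 1 / real n + 1 / (real n - 1) * (rho + rho') * c^2"
    unfolding rn1 C using final_alg0[OF NN m n1(2) n1(1)] by simp
  finally show ?thesis .
qed


lemma main_formula:
  fixes n h :: nat and \<sigma> \<delta> \<tau> :: complex
  assumes n2: "n \<ge> 2" and st: "\<sigma> * \<tau> \<noteq> 0" and h1: "1 \<le> h" and hn: "h \<le> n"
  shows "struct_cond_num n \<sigma> \<delta> \<tau> h =
           sqrt (1 / real n + 1 / (real n - 1) * (cmod (\<sigma> / \<tau>) + cmod (\<tau> / \<sigma>))
                  * (cos (real h * pi / real (n + 1)))^2)"
proof -
  define a where "a = csqrt (\<sigma>/\<tau>)"
  define b where "b = csqrt (cnj \<tau> / cnj \<sigma>)"
  define sk where "sk k = sin (real h * real k * pi / real (n+1))" for k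
  define x where "x = right_ev n \<sigma> \<tau> h"
  define y where "y = left_ev n \<sigma> \<tau> h"
  define m where "m = real (n+1) / 2"
  define C where "C = m * cos (real h * pi / real (n + 1))"
  have xk: "x k = a^k * of_real (sk k)" for k by (simp add: x_def right_ev_def a_def sk_def)
  have yk: "y k = b^k * of_real (sk k)" for k by (simp add: y_def left_ev_def b_def sk_def)
  have ab: "cnj b * a = 1" unfolding a_def b_def by (rule ab_one[OF st])
  have ba: "b * cnj a = 1" using ab by (metis complex_cnj_cnj complex_cnj_mult complex_cnj_one)
  have abk: "cnj b ^ k * a ^ k = 1" for k by (simp add: power_mult_distrib[symmetric] ab)
  have bak: "b ^ k * cnj a ^ k = 1" for k by (simp add: power_mult_distrib[symmetric] ba)
  have anz: "a \<noteq> 0" using ab by auto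
  have bnz: "b \<noteq> 0" using ab by auto
  have a2: "(cmod a)^2 = cmod (\<sigma>/\<tau>)" by (simp add: a_def)
  have b2: "(cmod b)^2 = cmod (\<tau>/\<sigma>)" by (simp add: b_def norm_divide)
  have msum: "(\<Sum>k=1..n. (sk k)^2) = m" using sin_sq_sum[OF h1 hn] by (simp add: sk_def m_def)
  have csum: "(\<Sum>k=1..n-1. sk k * sk (Suc k)) = C" using sin_prod_sum[OF h1 hn] by (simp add: sk_def m_def C_def)
  have mpos: "m > 0" by (simp add: m_def)
  have sk1: "sk 1 \<noteq> 0" using alpha_facts(1)[OF h1 hn] by (simp add: sk_def)
  define Nx where "Nx = vnorm n x"
  define Ny where "Ny = vnorm n y"
  have Nx: "Nx > 0"
  proof -
    have "(cmod (x 1))^2 \<le> (\<Sum>k=1..n. (cmod (x k))^2)" by (rule member_le_sum) (use n2 in auto)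
    moreover have "cmod (x 1) > 0" using anz sk1 by (simp add: xk)
    ultimately show ?thesis unfolding Nx_def vnorm_def
      by (smt (verit) real_sqrt_gt_zero zero_less_power)
  qed
  have Ny: "Ny > 0"
  proof -
    have "(cmod (y 1))^2 \<le> (\<Sum>k=1..n. (cmod (y k))^2)" by (rule member_le_sum) (use n2 in auto)
    moreover have "cmod (y 1) > 0" using bnz sk1 by (simp add: yk)
    ultimately show ?thesis unfolding Ny_def vnorm_def
      by (smt (verit) real_sqrt_gt_zero zero_less_power)
  qed
  define NN where "NN = Nx * Ny"
  have NN: "NN > 0" using Nx Ny by (simp add: NN_def)
  have t0: "cnj (y k) * x k = of_real ((sk k)^2)" for k
  proof -
    have "cnj (y k) * x k = (cnj b ^ k * a ^ k) * of_real (sk k * sk k)" by (simp add: xk yk ac_simps)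
    thus ?thesis by (simp add: abk power2_eq_square)
  qed
  have vin: "vinner n y x = of_real m" unfolding vinner_def t0 of_real_sum[symmetric] msum ..
  have cond: "cond_num n \<sigma> \<tau> h = NN / m"
    unfolding cond_num_def x_def[symmetric] y_def[symmetric] Nx_def[symmetric] Ny_def[symmetric] NN_def[symmetric] vin
    using mpos by simp
  define W where "W = wilkinson n \<sigma> \<tau> h"
  have Wij: "W i j = y i * cnj (x j) / of_real NN" if "i \<in> {1..n}" "j \<in> {1..n}" for i j
    using that unfolding W_def wilkinson_def x_def[symmetric] y_def[symmetric] Nx_def[symmetric] Ny_def[symmetric] NN_def
    by (simp add: complex_cnj_divide)
  have w0: "y i * cnj (x i) = of_real ((sk i)^2)" for i
  proof -
    have "y i * cnj (x i) = (b ^ i * cnj a ^ i) * of_real (sk i * sk i)" by (simp add: xk yk ac_simps)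
    thus ?thesis by (simp add: bak power2_eq_square)
  qed
  have w1: "y i * cnj (x (Suc i)) = cnj a * of_real (sk i * sk (Suc i))" for i
  proof -
    have "y i * cnj (x (Suc i)) = cnj a * (b ^ i * cnj a ^ i) * of_real (sk i * sk (Suc i))" by (simp add: xk yk ac_simps)
    thus ?thesis by (simp add: bak)
  qed
  have w2: "y (Suc i) * cnj (x i) = b * of_real (sk i * sk (Suc i))" for i
  proof -
    have "y (Suc i) * cnj (x i) = b * (b ^ i * cnj a ^ i) * of_real (sk i * sk (Suc i))" by (simp add: xk yk ac_simps)
    thus ?thesis by (simp add: bak)
  qed
  have S0: "(\<Sum>i=1..n. W i i) = of_real m / of_real NN"
  proof -
    have "(\<Sum>i=1..n. W i i) = (\<Sum>i=1..n. of_real ((sk i)^2) / of_real NN)"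
      by (rule sum.cong) (simp_all add: Wij w0)
    also have "\<dots> = of_real m / of_real NN" by (simp add: sum_divide_distrib[symmetric] msum[symmetric])
    finally show ?thesis .
  qed
  have S1: "(\<Sum>i=1..n-1. W i (Suc i)) = cnj a * of_real C / of_real NN"
  proof -
    have "(\<Sum>i=1..n-1. W i (Suc i)) = (\<Sum>i=1..n-1. cnj a * of_real (sk i * sk (Suc i)) / of_real NN)"
      by (rule sum.cong) (auto simp add: Wij w1)
    also have "\<dots> = cnj a * of_real C / of_real NN"
      by (simp add: sum_divide_distrib[symmetric] sum_distrib_left[symmetric] csum[symmetric])
    finally show ?thesis .
  qed
  have S2: "(\<Sum>i=1..n-1. W (Suc i) i) = b * of_real C / of_real NN"
  proof -
    have "(\<Sum>i=1..n-1. W (Suc i) i) = (\<Sum>i=1..n-1. b * of_real (sk i * sk (Suc i)) / of_real NN)"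
      by (rule sum.cong) (auto simp add: Wij w2)
    also have "\<dots> = b * of_real C / of_real NN"
      by (simp add: sum_divide_distrib[symmetric] sum_distrib_left[symmetric] csum[symmetric])
    finally show ?thesis .
  qed
  have fn: "frob_norm n (proj_tt n W) = sqrt (real n * (m^2 / (NN^2 * (real n)^2)) + real (n-1) * ((cmod a)^2 * C^2 / (NN^2 * (real (n-1))^2) + (cmod b)^2 * C^2 / (NN^2 * (real (n-1))^2)))"
  proof -
    have cn: "cmod (of_nat n - 1 :: complex) = real n - 1"
    proof -
      have "(of_nat n - 1 :: complex) = of_real (real n - 1)" by simp
      thus ?thesis using n2 by (simp only: norm_of_real)
    qed
    show ?thesis
    unfolding proj_tt_eq[OF n2] S0 S1 S2 using n2 mpos NN
    by (simp add: cn frob_norm_tt norm_divide norm_mult power_divide power_mult_distrib abs_of_pos ac_simps)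
  qed
  have "struct_cond_num n \<sigma> \<delta> \<tau> h = NN / m * frob_norm n (proj_tt n W)"
    unfolding struct_cond_num_def cond W_def ..
  also have "\<dots> = sqrt (1 / real n + 1 / (real n - 1) * ((cmod a)^2 + (cmod b)^2) * (cos (real h * pi / real (n + 1)))^2)"
    unfolding fn by (rule final_alg[OF NN mpos n2 C_def])
  finally show ?thesis unfolding a2 b2 .
qed


theorem proposition9:
  fixes n h :: nat and \<sigma> \<delta> \<tau> :: complex
  assumes "n \<ge> 2" and "\<sigma> * \<tau> \<noteq> 0" and "1 \<le> h" and "h \<le> n"
  shows "struct_cond_num n \<sigma> \<delta> \<tau> h =
           sqrt (1 / real n + 1 / (real n - 1) * (cmod (\<sigma> / \<tau>) + cmod (\<tau> / \<sigma>))
                  * (cos (real h * pi / real (n + 1)))^2)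
         \<and> (\<forall>\<sigma>' \<delta>' \<tau>'. \<sigma>' * \<tau>' \<noteq> 0 \<and> cmod (\<sigma>' / \<tau>') = cmod (\<sigma> / \<tau>) \<longrightarrow>
              struct_cond_num n \<sigma>' \<delta>' \<tau>' h = struct_cond_num n \<sigma> \<delta> \<tau> h)"
proof
  show "struct_cond_num n \<sigma> \<delta> \<tau> h =
           sqrt (1 / real n + 1 / (real n - 1) * (cmod (\<sigma> / \<tau>) + cmod (\<tau> / \<sigma>))
                  * (cos (real h * pi / real (n + 1)))^2)"
    by (rule main_formula[OF assms])
  have inv: "cmod (v / u) = inverse (cmod (u / v))" for u v :: complex
    by (simp add: norm_divide)
  show "\<forall>\<sigma>' \<delta>' \<tau>'. \<sigma>' * \<tau>' \<noteq> 0 \<and> cmod (\<sigma>' / \<tau>') = cmod (\<sigma> / \<tau>) \<longrightarrow>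
              struct_cond_num n \<sigma>' \<delta>' \<tau>' h = struct_cond_num n \<sigma> \<delta> \<tau> h"
  proof (intro allI impI)
    fix \<sigma>' \<delta>' \<tau>' :: complex
    assume a: "\<sigma>' * \<tau>' \<noteq> 0 \<and> cmod (\<sigma>' / \<tau>') = cmod (\<sigma> / \<tau>)"
    have "cmod (\<tau>' / \<sigma>') = cmod (\<tau> / \<sigma>)" using a inv by metis
    thus "struct_cond_num n \<sigma>' \<delta>' \<tau>' h = struct_cond_num n \<sigma> \<delta> \<tau> h"
      using main_formula[OF assms(1) _ assms(3,4), of \<sigma>' \<tau>' \<delta>'] main_formula[OF assms] a by simp
  qed
qed

end
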